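(* For every $0<\delta\le 1$ there exists a Guesser with $\log^2 n\cdot \log_{1+\delta} 2 + \log n$ bits of memory whose expected number of correct guesses against the random-shuffle Dealer is $$\frac{\delta}{(1+\delta)\ln(1+\delta)}\,\ln n .$$
   Context: Card guessing game: a deck consists of $n$ distinct cards labeled $1,\dots,n$ and the game lasts $n$ turns. In each turn the Dealer selects a card from the cards still in the deck and places it face down; the Guesser then names a card of $[n]$; the card is revealed and discarded. A guess is correct if it equals the drawn card; the score is the number of correct guesses. A Guesser with $m$ bits of memory keeps a memory state in $\{0,1\}^m$ between turns and consists of a (possibly randomized) guessing function (memory state $\mapsto$ guess) and a (possibly randomized) state-transition function (memory state and revealed card $\mapsto$ new memory state). The random-shuffle Dealer arranges the deck according to a uniformly random permutation and draws the cards in that order. $\log$ is base 2, $\ln$ is natural. *)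

theory Defs
  imports "HOL-Probability.Probability" "HOL-Combinatorics.Multiset_Permutations"
    "HOL-Library.Landau_Symbols"
begin

text \<open>A Guesser with m bits of memory: memory states are the numbers 0..2^m-1
  (encoding bitstrings in {0,1}^m); a randomized guessing function
  (state to distribution of guesses) and a randomized transition function
  (state, revealed card to distribution of new states), plus an initial state.\<close>

record guesser =
  mem_bits :: nat
  guess_fn :: "nat \<Rightarrow> nat pmf"
  trans_fn :: "nat \<Rightarrow> nat \<Rightarrow> nat pmf"
  init_state :: nat

definition valid_guesser :: "nat \<Rightarrow> guesser \<Rightarrow> bool" where
  "valid_guesser n G \<longleftrightarrow>
     init_state G < 2 ^ mem_bits G \<and>
     (\<forall>s < 2 ^ mem_bits G. set_pmf (guess_fn G s) \<subseteq> {1..n} \<and>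
        (\<forall>c \<in> {1..n}. set_pmf (trans_fn G s c) \<subseteq> {..< 2 ^ mem_bits G}))"

fun play :: "guesser \<Rightarrow> nat \<Rightarrow> nat list \<Rightarrow> nat pmf" where
  "play G s [] = return_pmf 0"
| "play G s (c # cs) =
     do { x \<leftarrow> guess_fn G s;
          s' \<leftarrow> trans_fn G s c;
          r \<leftarrow> play G s' cs;
          return_pmf ((if x = c then 1 else 0) + r) }"

definition expected_score :: "nat \<Rightarrow> guesser \<Rightarrow> real" where
  "expected_score n G =
     measure_pmf.expectation
       (pmf_of_set (permutations_of_set {1..n}) \<bind> (\<lambda>\<pi>. play G (init_state G) \<pi>))
       real"

end

theory Submission
  imports Defs
begin

fun enc :: "nat list \<Rightarrow> nat list \<Rightarrow> nat" where
  "enc (r#rs) (d#ds) = d + r * enc rs ds"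
| "enc _ _ = 0"

fun dec :: "nat list \<Rightarrow> nat \<Rightarrow> nat list" where
  "dec [] s = []"
| "dec (r#rs) s = (s mod r) # dec rs (s div r)"

lemma length_dec[simp]: "length (dec rs s) = length rs"
  by (induction rs arbitrary: s) auto

lemma dec_less: "i < length rs \<Longrightarrow> 0 < rs!i \<Longrightarrow> dec rs s ! i < rs ! i"
proof (induction rs arbitrary: s i)
  case Nil then show ?case by simp
next
  case (Cons r rs) then show ?case by (cases i) auto
qed

lemma dec_enc:
  "length ds = length rs \<Longrightarrow> (\<forall>i<length rs. ds!i < rs!i) \<Longrightarrow>
     dec rs (enc rs ds) = ds \<and> enc rs ds < prod_list rs"
proof (induction rs arbitrary: ds)
  case Nil then show ?case by simp
next
  case (Cons r rs)
  then obtain d ds' where ds: "ds = d # ds'" by (cases ds) auto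
  have dl: "d < r" using Cons.prems ds by force
  have IH: "dec rs (enc rs ds') = ds' \<and> enc rs ds' < prod_list rs"
    using Cons.IH[of ds'] Cons.prems ds by force
  define e where "e = enc rs ds'"
  have "(d + r * e) mod r = d" using dl by simp
  moreover have "(d + r * e) div r = e" using dl by simp
  moreover have "d + r * e < r * prod_list rs"
  proof -
    have "e + 1 \<le> prod_list rs" using IH e_def by simp
    then have "r * (e + 1) \<le> r * prod_list rs" by (rule mult_le_mono2)
    then show ?thesis using dl by (simp add: algebra_simps)
  qed
  ultimately show ?case using IH ds e_def by simp
qed

definition lvd :: "nat \<Rightarrow> nat set \<Rightarrow> nat" where
  "lvd s A = (card ({1..s} \<inter> A) mod s) * s + (\<Sum>({1..s} \<inter> A) mod s)"

definition upd :: "nat \<Rightarrow> nat \<Rightarrow> nat \<Rightarrow> nat" where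
  "upd s d c = (if c \<in> {1..s} then ((d div s + 1) mod s) * s + ((d mod s + c) mod s) else d)"

definition cert :: "nat \<Rightarrow> nat \<Rightarrow> bool" where
  "cert s d = (d div s = s - 1)"

definition cfun :: "nat \<Rightarrow> nat \<Rightarrow> nat" where
  "cfun s d = (LEAST y. y \<in> {1..s} \<and> (d mod s + y) mod s = (s * (s + 1) div 2) mod s)"

lemma mixed_less: "(0::nat) < s \<Longrightarrow> a < s \<Longrightarrow> b < s \<Longrightarrow> a * s + b < s * s"
proof -
  assume "0 < s" "a < s" "b < s"
  then have "a * s + b < a * s + s" by simp
  also have "\<dots> = (a + 1) * s" by simp
  also have "\<dots> \<le> s * s" using \<open>a < s\<close> by (intro mult_le_mono1) simp
  finally show ?thesis .
qed

lemma lvd_less: "0 < s \<Longrightarrow> lvd s A < s * s"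
  unfolding lvd_def by (rule mixed_less) auto

lemma upd_less: "0 < s \<Longrightarrow> d < s * s \<Longrightarrow> upd s d c < s * s"
  unfolding upd_def by (auto intro: mixed_less)

lemma mixed_div: "(0::nat) < s \<Longrightarrow> b < s \<Longrightarrow> (a * s + b) div s = a"
  by simp
lemma mixed_mod: "(0::nat) < s \<Longrightarrow> b < s \<Longrightarrow> (a * s + b) mod s = b"
  by simp

lemma upd_lvd:
  assumes "0 < s" "c \<notin> A" "finite A"
  shows "upd s (lvd s A) c = lvd s (insert c A)"
proof (cases "c \<in> {1..s}")
  case True
  have e1: "{1..s} \<inter> insert c A = insert c ({1..s} \<inter> A)" using True by auto
  have c1: "card ({1..s} \<inter> insert c A) = card ({1..s} \<inter> A) + 1"
    unfolding e1 using assms by simp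
  have s1: "\<Sum>({1..s} \<inter> insert c A) = \<Sum>({1..s} \<inter> A) + c"
    unfolding e1 using assms by simp
  show ?thesis using True assms
    unfolding upd_def lvd_def c1 s1
    by (simp add: mod_add_left_eq mod_Suc_eq)
next
  case False
  then have e1: "{1..s} \<inter> insert c A = {1..s} \<inter> A" by auto
  show ?thesis using False unfolding upd_def e1 lvd_def by (simp only: if_False)
qed

lemma sum_upto_nat: "\<Sum>{1..(s::nat)} = s * (s + 1) div 2"
  using gauss_sum_from_Suc_0[of s, where ?'a = nat] by simp

lemma add_mod_cancel_l: "((a::nat) + z) mod s = (a + y) mod s \<Longrightarrow> z mod s = y mod s"
proof -
  assume h: "(a + z) mod s = (a + y) mod s"
  show ?thesis
  proof (cases "y \<le> z")
    case True
    have "s dvd (a+z) - (a+y)" using mod_eq_dvd_iff_nat[of "a+y" "a+z" s] h True by simp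
    then have "s dvd z - y" by simp
    then show ?thesis using mod_eq_dvd_iff_nat[of y z s] True by simp
  next
    case False
    have "s dvd (a+y) - (a+z)" using mod_eq_dvd_iff_nat[of "a+z" "a+y" s] h False by simp
    then have "s dvd y - z" by simp
    then show ?thesis using mod_eq_dvd_iff_nat[of z y s] False by simp
  qed
qed

lemma cert_lvd:
  assumes "2 \<le> s" "finite A"
  shows "cert s (lvd s A) \<longleftrightarrow> card ({1..s} \<inter> A) = s - 1"
proof -
  have le: "card ({1..s} \<inter> A) \<le> s"
  proof -
    have "card ({1..s} \<inter> A) \<le> card {1..s}" by (rule card_mono) auto
    then show ?thesis by simp
  qed
  have "cert s (lvd s A) \<longleftrightarrow> card ({1..s} \<inter> A) mod s = s - 1"
    unfolding cert_def lvd_def using assms by simp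
  also have "\<dots> \<longleftrightarrow> card ({1..s} \<inter> A) = s - 1"
  proof (cases "card ({1..s} \<inter> A) = s")
    case True then show ?thesis using assms by simp
  next
    case False then have "card ({1..s} \<inter> A) < s" using le by simp
    then show ?thesis by simp
  qed
  finally show ?thesis .
qed

lemma cfun_lvd:
  assumes "1 \<le> s" "{1..s} - A = {y}"
  shows "cfun s (lvd s A) = y"
proof -
  have "y \<in> {1..s} - A" using assms(2) by simp
  then have y: "y \<in> {1..s}" "y \<notin> A" by auto
  have S: "{1..s} = insert y ({1..s} \<inter> A)" using assms(2) by blast
  have "\<Sum>{1..s} = \<Sum>(insert y ({1..s} \<inter> A))" by (rule arg_cong[where f=Sum, OF S])
  also have "\<dots> = y + \<Sum>({1..s} \<inter> A)" using y by (intro sum.insert) auto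
  finally have "\<Sum>({1..s} \<inter> A) + y = \<Sum>{1..s}" by simp
  then have sum: "\<Sum>({1..s} \<inter> A) + y = s * (s + 1) div 2"
    using sum_upto_nat[of s] by simp
  have lm: "lvd s A mod s = \<Sum>({1..s} \<inter> A) mod s"
    unfolding lvd_def using assms(1) by simp
  define P where "P = (\<lambda>z. z \<in> {1..s} \<and> (lvd s A mod s + z) mod s = (s * (s + 1) div 2) mod s)"
  have "(\<Sum>({1..s} \<inter> A) mod s + y) mod s = (\<Sum>({1..s} \<inter> A) + y) mod s" by (rule mod_add_left_eq)
  then have Py: "P y" unfolding P_def lm using y sum by simp
  have uniq: "z = y" if "P z" for z
  proof -
    have "(lvd s A mod s + z) mod s = (lvd s A mod s + y) mod s" using that Py unfolding P_def by simp
    then have zy: "z mod s = y mod s"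
      using add_mod_cancel_l by blast
    have z: "z \<in> {1..s}" using that unfolding P_def by simp
    have m: "w mod s = (if w = s then 0 else w)" if "w \<in> {1..s}" for w
      using that by auto
    show ?thesis using m[OF z] m[OF y(1)] zy z y(1)
      by (auto split: if_splits)
  qed
  have "(LEAST z. P z) = y"
  proof (rule Least_equality[where P=P, OF Py])
    fix z assume "P z"
    then have "z = y" by (rule uniq)
    then show "y \<le> z" by simp
  qed
  then show ?thesis unfolding cfun_def P_def .
qed

definition rads :: "nat list \<Rightarrow> nat list" where
  "rads ss = map (\<lambda>s. s * s) ss"

definition stt :: "nat list \<Rightarrow> nat set \<Rightarrow> nat" where
  "stt ss A = enc (rads ss) (map (\<lambda>s. lvd s A) ss)"

definition tr :: "nat list \<Rightarrow> nat \<Rightarrow> nat \<Rightarrow> nat" where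
  "tr ss st c = enc (rads ss) (map (\<lambda>i. upd (ss!i) (dec (rads ss) st ! i) c) [0..<length ss])"

definition gs :: "nat \<Rightarrow> nat list \<Rightarrow> nat \<Rightarrow> nat" where
  "gs n ss st = (let ds = dec (rads ss) st in
     if (\<exists>i<length ss. cert (ss!i) (ds!i)) then
       (let i = (LEAST i. i < length ss \<and> cert (ss!i) (ds!i)); y = cfun (ss!i) (ds!i) in
         if y \<in> {1..n} then y else 1)
     else 1)"

locale lev =
  fixes n :: nat and ss :: "nat list"
  assumes srt: "sorted_wrt (<) ss"
    and rng: "\<And>s. s \<in> set ss \<Longrightarrow> 2 \<le> s \<and> s \<le> n"
begin

lemma ss_ge: "i < length ss \<Longrightarrow> 2 \<le> ss!i" using rng nth_mem by blast
lemma ss_le: "i < length ss \<Longrightarrow> ss!i \<le> n" using rng nth_mem by blast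

lemma rads_pos: "i < length (rads ss) \<Longrightarrow> 0 < rads ss ! i"
proof -
  assume "i < length (rads ss)"
  then have "i < length ss" by (simp add: rads_def)
  then show ?thesis using ss_ge[of i] unfolding rads_def by simp
qed

lemma dec_stt: "dec (rads ss) (stt ss A) = map (\<lambda>s. lvd s A) ss"
  and stt_less: "stt ss A < prod_list (rads ss)"
proof -
  have "dec (rads ss) (stt ss A) = map (\<lambda>s. lvd s A) ss \<and> stt ss A < prod_list (rads ss)"
    unfolding stt_def
  proof (rule dec_enc)
    show "length (map (\<lambda>s. lvd s A) ss) = length (rads ss)" by (simp add: rads_def)
    show "\<forall>i<length (rads ss). map (\<lambda>s. lvd s A) ss ! i < rads ss ! i"
    proof (intro allI impI)
      fix i assume "i < length (rads ss)"
      then have i: "i < length ss" by (simp add: rads_def)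
      then show "map (\<lambda>s. lvd s A) ss ! i < rads ss ! i"
        using ss_ge[OF i] by (simp add: rads_def lvd_less)
    qed
  qed
  then show "dec (rads ss) (stt ss A) = map (\<lambda>s. lvd s A) ss" "stt ss A < prod_list (rads ss)" by auto
qed

lemma tr_less: "tr ss st c < prod_list (rads ss)"
proof -
  have "dec (rads ss) (tr ss st c) = map (\<lambda>i. upd (ss!i) (dec (rads ss) st ! i) c) [0..<length ss]
     \<and> tr ss st c < prod_list (rads ss)"
    unfolding tr_def
  proof (rule dec_enc)
    show "length (map (\<lambda>i. upd (ss!i) (dec (rads ss) st ! i) c) [0..<length ss]) = length (rads ss)"
      by (simp add: rads_def)
    show "\<forall>i<length (rads ss). map (\<lambda>i. upd (ss!i) (dec (rads ss) st ! i) c) [0..<length ss] ! i < rads ss ! i"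
    proof (intro allI impI)
      fix i assume i: "i < length (rads ss)"
      have "dec (rads ss) st ! i < rads ss ! i" using dec_less[OF i rads_pos[OF i]] .
      then show "map (\<lambda>i. upd (ss!i) (dec (rads ss) st ! i) c) [0..<length ss] ! i < rads ss ! i"
        using i ss_ge[of i] by (auto simp: rads_def intro!: upd_less)
    qed
  qed
  then show ?thesis by simp
qed

lemma tr_stt:
  assumes "finite A" "c \<notin> A"
  shows "tr ss (stt ss A) c = stt ss (insert c A)"
proof -
  have "map (\<lambda>i. upd (ss!i) (dec (rads ss) (stt ss A) ! i) c) [0..<length ss]
      = map (\<lambda>s. lvd s (insert c A)) ss"
  proof (rule nth_equalityI)
    fix i assume "i < length (map (\<lambda>i. upd (ss!i) (dec (rads ss) (stt ss A) ! i) c) [0..<length ss])"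
    then have i: "i < length ss" by simp
    show "map (\<lambda>i. upd (ss!i) (dec (rads ss) (stt ss A) ! i) c) [0..<length ss] ! i
        = map (\<lambda>s. lvd s (insert c A)) ss ! i"
      using i ss_ge[OF i] assms by (simp add: dec_stt upd_lvd)
  qed simp
  then show ?thesis unfolding tr_def stt_def by simp
qed

lemma gs_range: "1 \<le> n \<Longrightarrow> gs n ss st \<in> {1..n}"
proof -
  assume n: "1 \<le> n"
  have aux: "(if P then (if (y::nat) \<in> {1..n} then y else 1) else 1) \<in> {1..n}" for P y
    using n by simp
  show ?thesis unfolding gs_def Let_def by (rule aux)
qed

lemma cert_iff:
  assumes "i < length ss" "finite A"
  shows "cert (ss!i) (dec (rads ss) (stt ss A) ! i) \<longleftrightarrow> (\<exists>y. {1..ss!i} - A = {y})"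
proof -
  have "cert (ss!i) (dec (rads ss) (stt ss A) ! i) \<longleftrightarrow> card ({1..ss!i} \<inter> A) = ss!i - 1"
    using assms ss_ge[OF assms(1)] by (simp add: dec_stt cert_lvd)
  also have "\<dots> \<longleftrightarrow> card ({1..ss!i} - A) = 1"
  proof -
    have "card ({1..ss!i} - A) = card {1..ss!i} - card ({1..ss!i} \<inter> A)"
      by (rule card_Diff_subset_Int) simp
    moreover have "card ({1..ss!i} \<inter> A) \<le> ss!i"
    proof -
      have "card ({1..ss!i} \<inter> A) \<le> card {1..ss!i}" by (rule card_mono) auto
      then show ?thesis by simp
    qed
    ultimately show ?thesis using ss_ge[OF assms(1)] by auto
  qed
  also have "\<dots> \<longleftrightarrow> (\<exists>y. {1..ss!i} - A = {y})" using card_1_singleton_iff by simp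
  finally show ?thesis .
qed

lemma gs_cert:
  assumes "finite A" "i0 < length ss" "{1..ss!i0} - A = {y0}"
  shows "\<exists>i<length ss. {1..ss!i} - A = {gs n ss (stt ss A)}"
proof -
  define ds where "ds = dec (rads ss) (stt ss A)"
  have "cert (ss!i0) (ds!i0)"
    unfolding ds_def using cert_iff[OF assms(2,1)] assms(3) by blast
  then have ex: "\<exists>i<length ss. cert (ss!i) (ds!i)" using assms(2) by blast
  define i where "i = (LEAST i. i < length ss \<and> cert (ss!i) (ds!i))"
  have i: "i < length ss \<and> cert (ss!i) (ds!i)"
    unfolding i_def using ex by - (rule LeastI_ex, blast)
  have "\<exists>y. {1..ss!i} - A = {y}"
    using cert_iff[OF conjunct1[OF i] assms(1)] conjunct2[OF i] unfolding ds_def by blast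
  then obtain y where y: "{1..ss!i} - A = {y}" by blast
  have "ds ! i = lvd (ss!i) A" unfolding ds_def using i by (simp add: dec_stt)
  then have cf: "cfun (ss!i) (ds!i) = y"
    using cfun_lvd[of "ss!i" A y] y ss_ge[of i] i by simp
  moreover have "y \<in> {1..n}"
  proof -
    have "y \<in> {1..ss!i}" using y by blast
    then show ?thesis using ss_le[of i] i by auto
  qed
  moreover have "gs n ss (stt ss A) = (if cfun (ss!i) (ds!i) \<in> {1..n} then cfun (ss!i) (ds!i) else 1)"
    unfolding gs_def Let_def ds_def[symmetric] i_def[symmetric] by (rule if_P[OF ex])
  ultimately have "gs n ss (stt ss A) = y" by simp
  then show ?thesis using i y by auto
qed


end

definition Tl :: "nat list \<Rightarrow> nat \<Rightarrow> nat set" where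
  "Tl ss i = {(if i = 0 then 0 else ss!(i-1))<..ss!i}"

definition Ev :: "nat list \<Rightarrow> nat \<Rightarrow> nat list \<Rightarrow> bool" where
  "Ev ss i cs = (filter (\<lambda>y. y \<in> {1..ss!i}) cs \<noteq> [] \<and> last (filter (\<lambda>y. y \<in> {1..ss!i}) cs) \<in> Tl ss i)"

fun sc :: "nat \<Rightarrow> nat list \<Rightarrow> nat \<Rightarrow> nat list \<Rightarrow> nat" where
  "sc n ss st [] = 0"
| "sc n ss st (c#cs) = (if gs n ss st = c then 1 else 0) + sc n ss (tr ss st c) cs"

context lev begin

lemma srt': "sorted ss" using srt by (metis sorted_wrt_mono_rel less_imp_le sorted_wrt_iff_nth_less sorted_iff_nth_mono_less)

lemma ss_mono: "i \<le> j \<Longrightarrow> j < length ss \<Longrightarrow> ss!i \<le> ss!j"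
  using srt' by (rule sorted_nth_mono)

lemma Tl_sub: "Tl ss i \<subseteq> {1..ss!i}"
  unfolding Tl_def by auto

lemma Tl_mem: "c \<in> Tl ss i \<longleftrightarrow> c \<le> ss!i \<and> (0 < i \<longrightarrow> ss!(i-1) < c) \<and> 0 < c"
  unfolding Tl_def by (cases "i = 0") auto

lemma Tl_disj:
  assumes "i < length ss" "j < length ss" "c \<in> Tl ss i" "c \<in> Tl ss j"
  shows "i = j"
proof (rule ccontr)
  assume "i \<noteq> j"
  then consider "i < j" | "j < i" by linarith
  then show False
  proof cases
    case 1
    then have "ss!i \<le> ss!(j-1)" using assms(2) by (intro ss_mono) auto
    moreover have "c \<le> ss!i" "ss!(j-1) < c" using assms(3,4) 1 unfolding Tl_mem by auto
    ultimately show False by linarith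
  next
    case 2
    then have "ss!j \<le> ss!(i-1)" using assms(1) by (intro ss_mono) auto
    moreover have "c \<le> ss!j" "ss!(i-1) < c" using assms(3,4) 2 unfolding Tl_mem by auto
    ultimately show False by linarith
  qed
qed

lemma Tl_cover:
  assumes "i0 < length ss" "c \<in> {1..ss!i0}"
  shows "\<exists>i\<le>i0. c \<in> Tl ss i"
proof -
  define P where "P = (\<lambda>i. c \<le> ss!i)"
  have P0: "P i0" unfolding P_def using assms(2) by simp
  define i where "i = (LEAST i. P i)"
  have ci: "P i" unfolding i_def by (rule LeastI[of P i0, OF P0])
  have ii0: "i \<le> i0" unfolding i_def by (rule Least_le[of P i0, OF P0])
  have "c \<in> Tl ss i"
  proof (cases "i = 0")
    case True then show ?thesis using ci assms(2) unfolding Tl_mem P_def by auto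
  next
    case False
    have "i - 1 < i" using False by simp
    then have "\<not> P (i-1)" unfolding i_def by (rule not_less_Least)
    then show ?thesis using ci False assms(2) unfolding Tl_mem P_def by auto
  qed
  then show ?thesis using ii0 by blast
qed

lemma Ev_Cons:
  assumes "i < length ss"
  shows "Ev ss i (c#cs) \<longleftrightarrow> Ev ss i cs \<or> (c \<in> Tl ss i \<and> {1..ss!i} \<inter> set cs = {})"
proof -
  have fe: "filter (\<lambda>y. y \<in> {1..ss!i}) cs = [] \<longleftrightarrow> {1..ss!i} \<inter> set cs = {}"
    by (auto simp: filter_empty_conv)
  show ?thesis
  proof (cases "filter (\<lambda>y. y \<in> {1..ss!i}) cs = []")
    case True
    then show ?thesis using fe Tl_sub[of i] unfolding Ev_def by auto
  next
    case False
    then show ?thesis using fe unfolding Ev_def by auto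
  qed
qed

lemma gs_nocert:
  assumes "finite A" "\<not> (\<exists>i<length ss. \<exists>y. {1..ss!i} - A = {y})"
  shows "gs n ss (stt ss A) = 1"
proof -
  have "\<not> (\<exists>i<length ss. cert (ss!i) (dec (rads ss) (stt ss A) ! i))"
    using cert_iff[OF _ assms(1)] assms(2) by blast
  then show ?thesis unfolding gs_def Let_def by (rule if_not_P)
qed

lemma sc_bounds:
  "distinct cs \<Longrightarrow> finite A \<Longrightarrow> A \<inter> set cs = {} \<Longrightarrow> A \<union> set cs = {1..n} \<Longrightarrow>
   card {i. i < length ss \<and> Ev ss i cs} \<le> sc n ss (stt ss A) cs \<and>
   sc n ss (stt ss A) cs \<le> card {i. i < length ss \<and> Ev ss i cs} + (if 1 \<in> set cs then 1 else 0)"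
proof (induction cs arbitrary: A)
  case Nil
  then show ?case by (simp add: Ev_def)
next
  case (Cons c cs)
  define E' where "E' = {i. i < length ss \<and> Ev ss i cs}"
  define H where "H = {i. i < length ss \<and> c \<in> Tl ss i \<and> {1..ss!i} \<inter> set cs = {}}"
  have cA: "c \<notin> A" using Cons.prems by auto
  have ccs: "c \<notin> set cs" using Cons.prems by auto
  have Eeq: "{i. i < length ss \<and> Ev ss i (c#cs)} = E' \<union> H"
    unfolding E'_def H_def using Ev_Cons by auto
  have disj: "E' \<inter> H = {}"
    unfolding E'_def H_def Ev_def by (auto simp: filter_empty_conv)
  have fin: "finite E'" "finite H" unfolding E'_def H_def by auto
  have cardE: "card {i. i < length ss \<and> Ev ss i (c#cs)} = card E' + card H"
    unfolding Eeq using disj fin by (simp add: card_Un_disjoint)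
  have H1: "card H \<le> 1"
    using card_le_Suc0_iff_eq[OF fin(2)] Tl_disj unfolding H_def by auto
  define h where "h = (if gs n ss (stt ss A) = c then 1 else (0::nat))"
  have SiA: "{1..ss!i} - A = {c}" if "i \<in> H" for i
  proof -
    have i: "i < length ss" "c \<in> Tl ss i" "{1..ss!i} \<inter> set cs = {}" using that unfolding H_def by auto
    have "c \<in> {1..ss!i}" using i Tl_sub by blast
    moreover have "{1..ss!i} \<subseteq> {1..n}" using ss_le[OF i(1)] by auto
    ultimately show ?thesis using i(3) cA Cons.prems(4) by auto
  qed
  have hit1: "h = 1" if hne: "H \<noteq> {}"
  proof -
    obtain i where iH: "i \<in> H" using hne by blast
    have il: "i < length ss" using iH unfolding H_def by auto
    obtain j where j: "j < length ss" "{1..ss!j} - A = {gs n ss (stt ss A)}"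
      using gs_cert[OF Cons.prems(2) il SiA[OF iH]] by blast
    have "gs n ss (stt ss A) = c"
    proof (cases "ss!j \<le> ss!i")
      case True
      then have "{1..ss!j} - A \<subseteq> {1..ss!i} - A" by auto
      then have "{gs n ss (stt ss A)} \<subseteq> {c}" unfolding j(2) SiA[OF iH] .
      then show ?thesis by blast
    next
      case False
      then have "{1..ss!i} - A \<subseteq> {1..ss!j} - A" by auto
      then have "{c} \<subseteq> {gs n ss (stt ss A)}" unfolding j(2) SiA[OF iH] .
      then show ?thesis by blast
    qed
    then show ?thesis unfolding h_def by simp
  qed
  have hit2: "H \<noteq> {}" if hh: "h = 1" "c \<noteq> 1"
  proof -
    have g: "gs n ss (stt ss A) = c"
    proof (rule ccontr)
      assume "gs n ss (stt ss A) \<noteq> c"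
      then have "h = 0" unfolding h_def by (simp only: if_False)
      then show False using hh(1) by simp
    qed
    have "\<exists>i<length ss. \<exists>y. {1..ss!i} - A = {y}"
      using gs_nocert[OF Cons.prems(2)] g hh(2) by auto
    then obtain i0 y0 where i0: "i0 < length ss" "{1..ss!i0} - A = {y0}" by blast
    obtain j where j: "j < length ss" "{1..ss!j} - A = {c}"
      using gs_cert[OF Cons.prems(2) i0] g by auto
    have "c \<in> {1..ss!j}" using j(2) by blast
    then obtain i where i: "i \<le> j" "c \<in> Tl ss i" using Tl_cover[OF j(1)] by blast
    have sub: "{1..ss!i} \<subseteq> {1..ss!j}" using ss_mono[OF i(1) j(1)] by auto
    have "{1..ss!i} \<inter> set cs = {}"
    proof -
      have "{1..ss!i} \<inter> set cs \<subseteq> ({1..ss!j} - A) - {c}"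
        using sub Cons.prems(3) ccs by auto
      then show ?thesis using j(2) by auto
    qed
    then have "i \<in> H" unfolding H_def using i j(1) by auto
    then show ?thesis by blast
  qed
  have hl: "card H \<le> h"
  proof (cases "H = {}")
    case True then show ?thesis by simp
  next
    case False then show ?thesis using hit1 H1 by simp
  qed
  have hu: "h \<le> card H + (if c = 1 then 1 else 0)"
  proof (cases "h = 1")
    case True
    show ?thesis
    proof (cases "c = 1")
      case True then show ?thesis using \<open>h = 1\<close> by simp
    next
      case False
      then have "H \<noteq> {}" using hit2 \<open>h = 1\<close> by blast
      then have "card H \<ge> 1" using fin(2) by (simp add: Suc_leI card_gt_0_iff)
      then show ?thesis using \<open>h = 1\<close> by simp
    qed
  next
    case False then have "h = 0" unfolding h_def by (cases "gs n ss (stt ss A) = c") simp_all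
    then show ?thesis by simp
  qed
  have IH: "card E' \<le> sc n ss (stt ss (insert c A)) cs \<and>
      sc n ss (stt ss (insert c A)) cs \<le> card E' + (if 1 \<in> set cs then 1 else 0)"
    unfolding E'_def using Cons.prems by (intro Cons.IH) auto
  have sceq: "sc n ss (stt ss A) (c#cs) = h + sc n ss (stt ss (insert c A)) cs"
    unfolding h_def using tr_stt[OF Cons.prems(2) cA] by simp
  have one: "(if 1 \<in> set (c#cs) then 1 else 0) = (if c = 1 then 1 else 0) + (if 1 \<in> set cs then 1 else (0::nat))"
    using ccs by auto
  show ?case unfolding sceq cardE one using IH hl hu by linarith
qed

end

definition Gd :: "nat \<Rightarrow> nat list \<Rightarrow> guesser" where
  "Gd n ss = \<lparr>mem_bits = nat \<lceil>log 2 (real (prod_list (rads ss)))\<rceil>,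
              guess_fn = (\<lambda>st. return_pmf (gs n ss st)),
              trans_fn = (\<lambda>st c. return_pmf (tr ss st c)),
              init_state = stt ss {}\<rparr>"

lemma play_Gd: "play (Gd n ss) st cs = return_pmf (sc n ss st cs)"
  by (induction cs arbitrary: st) (simp_all add: Gd_def bind_return_pmf)

lemma fiber_card:
  assumes "finite P" "finite T"
  shows "card {x\<in>P. f x \<in> T} = (\<Sum>b\<in>T. card {x\<in>P. f x = b})"
proof -
  have "{x\<in>P. f x \<in> T} = (\<Union>b\<in>T. {x\<in>P. f x = b})" by auto
  moreover have "card (\<Union>b\<in>T. {x\<in>P. f x = b}) = (\<Sum>b\<in>T. card {x\<in>P. f x = b})"
    by (rule card_UN_disjoint) (use assms in auto)
  ultimately show ?thesis by simp
qed

lemma last_filter_swap: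
  fixes S :: "nat set"
  assumes "b \<in> S" "b' \<in> S" "filter (\<lambda>y. y \<in> S) xs \<noteq> []"
  shows "last (filter (\<lambda>y. y \<in> S) (map (Transposition.transpose b b') xs))
       = Transposition.transpose b b' (last (filter (\<lambda>y. y \<in> S) xs))"
proof -
  have eq: "((\<lambda>y. y \<in> S) \<circ> Transposition.transpose b b') = (\<lambda>y. y \<in> S)"
  proof
    fix y
    show "((\<lambda>y. y \<in> S) \<circ> Transposition.transpose b b') y = (y \<in> S)"
      using assms(1,2) by (cases "y = b"; cases "y = b'") auto
  qed
  show ?thesis unfolding filter_map eq using assms(3) by (simp add: last_map)
qed

lemma sym_count:
  fixes S :: "nat set"
  assumes S: "S \<subseteq> {1..n}" "b \<in> S" "b' \<in> S"
  defines "P \<equiv> permutations_of_set {1..n}"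
  shows "card {\<pi>\<in>P. last (filter (\<lambda>y. y \<in> S) \<pi>) = b} = card {\<pi>\<in>P. last (filter (\<lambda>y. y \<in> S) \<pi>) = b'}"
proof -
  define \<tau> where "\<tau> = Transposition.transpose b b'"
  have tinv: "\<tau> (\<tau> x) = x" for x unfolding \<tau>_def by simp
  have img: "\<tau> ` {1..n} = {1..n}" unfolding \<tau>_def using S by (intro transpose_image_eq) auto
  have inP: "map \<tau> \<pi> \<in> P" if "\<pi> \<in> P" for \<pi>
  proof -
    have "set \<pi> = {1..n}" "distinct \<pi>" using that permutations_of_setD unfolding P_def by auto
    moreover have "inj \<tau>" unfolding \<tau>_def by (simp add: inj_transpose)
    ultimately have "set (map \<tau> \<pi>) = {1..n}" "distinct (map \<tau> \<pi>)"
      using img by (auto simp: distinct_map intro: inj_on_subset[of _ UNIV])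
    then show ?thesis unfolding P_def by (rule permutations_of_setI)
  qed
  have fne: "filter (\<lambda>y. y \<in> S) \<pi> \<noteq> []" if "\<pi> \<in> P" for \<pi>
  proof -
    have "set \<pi> = {1..n}" using that permutations_of_setD unfolding P_def by auto
    then have "b \<in> set \<pi>" using S by auto
    then show ?thesis using S(2) by (auto simp: filter_empty_conv)
  qed
  have lt: "last (filter (\<lambda>y. y \<in> S) (map \<tau> \<pi>)) = \<tau> (last (filter (\<lambda>y. y \<in> S) \<pi>))" if "\<pi> \<in> P" for \<pi>
    unfolding \<tau>_def using last_filter_swap[OF S(2,3) fne[OF that]] .
  have tb: "\<tau> b = b'" "\<tau> b' = b" unfolding \<tau>_def by simp_all
  have "bij_betw (map \<tau>) {\<pi>\<in>P. last (filter (\<lambda>y. y \<in> S) \<pi>) = b} {\<pi>\<in>P. last (filter (\<lambda>y. y \<in> S) \<pi>) = b'}"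
  proof (rule bij_betw_byWitness[where f' = "map \<tau>"])
    show "\<forall>a\<in>{\<pi> \<in> P. last (filter (\<lambda>y. y \<in> S) \<pi>) = b}. map \<tau> (map \<tau> a) = a"
      by (simp add: tinv map_idI)
    show "\<forall>a\<in>{\<pi> \<in> P. last (filter (\<lambda>y. y \<in> S) \<pi>) = b'}. map \<tau> (map \<tau> a) = a"
      by (simp add: tinv map_idI)
    show "map \<tau> ` {\<pi> \<in> P. last (filter (\<lambda>y. y \<in> S) \<pi>) = b} \<subseteq> {\<pi> \<in> P. last (filter (\<lambda>y. y \<in> S) \<pi>) = b'}"
      using inP lt tb by auto
    show "map \<tau> ` {\<pi> \<in> P. last (filter (\<lambda>y. y \<in> S) \<pi>) = b'} \<subseteq> {\<pi> \<in> P. last (filter (\<lambda>y. y \<in> S) \<pi>) = b}"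
      using inP lt tb by auto
  qed
  then show ?thesis by (rule bij_betw_same_card)
qed

lemma last_count:
  fixes S :: "nat set"
  assumes S: "S \<subseteq> {1..n}" "b \<in> S"
  defines "P \<equiv> permutations_of_set {1..n}"
  shows "real (card {\<pi>\<in>P. last (filter (\<lambda>y. y \<in> S) \<pi>) = b}) * real (card S) = fact n"
proof -
  have finS: "finite S" using S finite_subset by blast
  have into: "last (filter (\<lambda>y. y \<in> S) \<pi>) \<in> S" if "\<pi> \<in> P" for \<pi>
  proof -
    have "set \<pi> = {1..n}" using that permutations_of_setD unfolding P_def by auto
    then have "b \<in> set \<pi>" using S by auto
    then have "filter (\<lambda>y. y \<in> S) \<pi> \<noteq> []" using S(2) by (auto simp: filter_empty_conv)
    then have "last (filter (\<lambda>y. y \<in> S) \<pi>) \<in> set (filter (\<lambda>y. y \<in> S) \<pi>)" by (rule last_in_set)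
    then show ?thesis by simp
  qed
  have "{\<pi>\<in>P. last (filter (\<lambda>y. y \<in> S) \<pi>) \<in> S} = P" using into by blast
  then have "card P = card {\<pi>\<in>P. last (filter (\<lambda>y. y \<in> S) \<pi>) \<in> S}" by simp
  also have "\<dots> = (\<Sum>b'\<in>S. card {\<pi>\<in>P. last (filter (\<lambda>y. y \<in> S) \<pi>) = b'})"
    by (rule fiber_card) (auto simp: P_def finS)
  also have "\<dots> = (\<Sum>b'\<in>S. card {\<pi>\<in>P. last (filter (\<lambda>y. y \<in> S) \<pi>) = b})"
  proof (rule sum.cong[OF refl])
    fix b' assume b': "b' \<in> S"
    show "card {\<pi>\<in>P. last (filter (\<lambda>y. y \<in> S) \<pi>) = b'} = card {\<pi>\<in>P. last (filter (\<lambda>y. y \<in> S) \<pi>) = b}"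
      using sym_count[OF S(1) S(2) b'] unfolding P_def by (rule sym)
  qed
  also have "\<dots> = card S * card {\<pi>\<in>P. last (filter (\<lambda>y. y \<in> S) \<pi>) = b}" by simp
  finally have "card P = card S * card {\<pi>\<in>P. last (filter (\<lambda>y. y \<in> S) \<pi>) = b}" .
  then have "real (card P) = real (card S) * real (card {\<pi>\<in>P. last (filter (\<lambda>y. y \<in> S) \<pi>) = b})"
    by (simp only: of_nat_mult)
  moreover have "real (card P) = fact n" unfolding P_def by (simp add: of_nat_fact)
  ultimately show ?thesis by (simp add: mult.commute)
qed

lemma card_filter_sum:
  assumes "finite A"
  shows "real (card {x\<in>A. Q x}) = (\<Sum>x\<in>A. if Q x then 1 else 0)"
proof -
  have "real (card {x\<in>A. Q x}) = (\<Sum>x\<in>{x\<in>A. Q x}. 1)" by simp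
  also have "\<dots> = (\<Sum>x\<in>A. if Q x then 1 else 0)" by (rule sum.inter_filter[OF assms])
  finally show ?thesis .
qed

lemma prod_list_ge1: "\<forall>x\<in>set xs. (1::nat) \<le> x \<Longrightarrow> 1 \<le> prod_list xs"
  by (induction xs) auto

definition Lsum :: "nat list \<Rightarrow> real" where
  "Lsum ss = (\<Sum>i<length ss. real (card (Tl ss i)) / real (ss!i))"

context lev begin

lemma Ev_count:
  assumes i: "i < length ss"
  shows "real (card {\<pi>\<in>permutations_of_set {1..n}. Ev ss i \<pi>}) = fact n * real (card (Tl ss i)) / real (ss!i)"
proof -
  define P where "P = permutations_of_set {1..n}"
  define S where "S = {1..ss!i}"
  have Sn: "S \<subseteq> {1..n}" unfolding S_def using ss_le[OF i] by auto
  have fne: "filter (\<lambda>y. y \<in> S) \<pi> \<noteq> []" if "\<pi> \<in> P" for \<pi>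
  proof -
    have "set \<pi> = {1..n}" using that permutations_of_setD unfolding P_def by auto
    moreover have "1 \<in> S" unfolding S_def using ss_ge[OF i] by auto
    ultimately show ?thesis using Sn by (auto simp: filter_empty_conv)
  qed
  have "{\<pi>\<in>P. Ev ss i \<pi>} = {\<pi>\<in>P. last (filter (\<lambda>y. y \<in> S) \<pi>) \<in> Tl ss i}"
    using fne unfolding Ev_def S_def by blast
  moreover have "card {\<pi>\<in>P. last (filter (\<lambda>y. y \<in> S) \<pi>) \<in> Tl ss i} = (\<Sum>b\<in>Tl ss i. card {\<pi>\<in>P. last (filter (\<lambda>y. y \<in> S) \<pi>) = b})"
    by (rule fiber_card) (auto simp: P_def Tl_def)
  ultimately have "card {\<pi>\<in>P. Ev ss i \<pi>} = (\<Sum>b\<in>Tl ss i. card {\<pi>\<in>P. last (filter (\<lambda>y. y \<in> S) \<pi>) = b})"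
    by simp
  then have "real (card {\<pi>\<in>P. Ev ss i \<pi>}) = (\<Sum>b\<in>Tl ss i. real (card {\<pi>\<in>P. last (filter (\<lambda>y. y \<in> S) \<pi>) = b}))"
    by simp
  also have "\<dots> = (\<Sum>b\<in>Tl ss i. fact n / real (ss!i))"
  proof (rule sum.cong[OF refl])
    fix b assume b: "b \<in> Tl ss i"
    then have bS: "b \<in> S" using Tl_sub unfolding S_def by blast
    have cS: "card S = ss!i" unfolding S_def by simp
    have pos: "real (ss!i) > 0" using ss_ge[OF i] by simp
    have "real (card {\<pi>\<in>P. last (filter (\<lambda>y. y \<in> S) \<pi>) = b}) * real (ss!i) = fact n"
      using last_count[OF Sn bS] unfolding P_def cS .
    then show "real (card {\<pi>\<in>P. last (filter (\<lambda>y. y \<in> S) \<pi>) = b}) = fact n / real (ss!i)"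
      using pos by (simp add: field_simps)
  qed
  also have "\<dots> = fact n * real (card (Tl ss i)) / real (ss!i)" by simp
  finally show ?thesis unfolding P_def .
qed

lemma expected_Gd:
  "expected_score n (Gd n ss) =
     (\<Sum>\<pi>\<in>permutations_of_set {1..n}. real (sc n ss (stt ss {}) \<pi>)) / fact n"
proof -
  define P where "P = permutations_of_set {1..n}"
  have Pne: "P \<noteq> {}" "finite P" unfolding P_def by auto
  have "pmf_of_set P \<bind> (\<lambda>\<pi>. play (Gd n ss) (init_state (Gd n ss)) \<pi>)
      = map_pmf (sc n ss (stt ss {})) (pmf_of_set P)"
    unfolding play_Gd map_pmf_def by (simp add: Gd_def)
  then have "expected_score n (Gd n ss) = measure_pmf.expectation (pmf_of_set P) (\<lambda>\<pi>. real (sc n ss (stt ss {}) \<pi>))"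
    unfolding expected_score_def P_def[symmetric] by simp
  also have "\<dots> = (\<Sum>\<pi>\<in>P. real (sc n ss (stt ss {}) \<pi>)) / real (card P)"
    by (rule integral_pmf_of_set[OF Pne])
  also have "real (card P) = fact n" unfolding P_def by (simp add: of_nat_fact)
  finally show ?thesis unfolding P_def .
qed

lemma score_bounds:
  "Lsum ss \<le> expected_score n (Gd n ss) \<and> expected_score n (Gd n ss) \<le> Lsum ss + 1"
proof -
  define P where "P = permutations_of_set {1..n}"
  define f where "f = (\<lambda>\<pi>. real (card {i. i < length ss \<and> Ev ss i \<pi>}))"
  have fin: "finite P" unfolding P_def by simp
  have bnd: "f \<pi> \<le> real (sc n ss (stt ss {}) \<pi>) \<and> real (sc n ss (stt ss {}) \<pi>) \<le> f \<pi> + 1" if "\<pi> \<in> P" for \<pi>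
  proof -
    have "set \<pi> = {1..n}" "distinct \<pi>" using that permutations_of_setD unfolding P_def by auto
    then have "card {i. i < length ss \<and> Ev ss i \<pi>} \<le> sc n ss (stt ss {}) \<pi> \<and>
      sc n ss (stt ss {}) \<pi> \<le> card {i. i < length ss \<and> Ev ss i \<pi>} + (if 1 \<in> set \<pi> then 1 else 0)"
      by (intro sc_bounds) auto
    then show ?thesis unfolding f_def by (cases "1 \<in> set \<pi>") auto
  qed
  have sumf: "(\<Sum>\<pi>\<in>P. f \<pi>) = fact n * Lsum ss"
  proof -
    have "(\<Sum>\<pi>\<in>P. f \<pi>) = (\<Sum>\<pi>\<in>P. \<Sum>i<length ss. if Ev ss i \<pi> then 1 else 0)"
    proof (rule sum.cong[OF refl])
      fix \<pi>
      have eq: "{i. i < length ss \<and> Ev ss i \<pi>} = {i\<in>{..<length ss}. Ev ss i \<pi>}" by auto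
      show "f \<pi> = (\<Sum>i<length ss. if Ev ss i \<pi> then 1 else 0)"
        unfolding f_def eq by (rule card_filter_sum) simp
    qed
    also have "\<dots> = (\<Sum>i<length ss. \<Sum>\<pi>\<in>P. if Ev ss i \<pi> then 1 else 0)"
      by (rule sum.swap)
    also have "\<dots> = (\<Sum>i<length ss. real (card {\<pi>\<in>P. Ev ss i \<pi>}))"
      using fin by (simp add: card_filter_sum)
    also have "\<dots> = (\<Sum>i<length ss. fact n * (real (card (Tl ss i)) / real (ss!i)))"
      unfolding P_def by (intro sum.cong refl) (simp add: Ev_count[simplified])
    also have "\<dots> = fact n * Lsum ss" unfolding Lsum_def by (simp add: sum_distrib_left)
    finally show ?thesis .
  qed
  have cardP: "card P = fact n" unfolding P_def by simp
  have fpos: "(fact n :: real) > 0" by simp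
  have lo: "(\<Sum>\<pi>\<in>P. f \<pi>) \<le> (\<Sum>\<pi>\<in>P. real (sc n ss (stt ss {}) \<pi>))"
    using bnd by (intro sum_mono) auto
  have hi: "(\<Sum>\<pi>\<in>P. real (sc n ss (stt ss {}) \<pi>)) \<le> (\<Sum>\<pi>\<in>P. f \<pi> + 1)"
    using bnd by (intro sum_mono) auto
  have hi2: "(\<Sum>\<pi>\<in>P. f \<pi> + 1) = fact n * Lsum ss + fact n"
    using sumf cardP by (simp add: sum.distrib of_nat_fact)
  have E: "expected_score n (Gd n ss) = (\<Sum>\<pi>\<in>P. real (sc n ss (stt ss {}) \<pi>)) / fact n"
    unfolding P_def by (rule expected_Gd)
  show ?thesis
  proof
    show "Lsum ss \<le> expected_score n (Gd n ss)"
      unfolding E using lo sumf fpos by (simp add: field_simps)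
    show "expected_score n (Gd n ss) \<le> Lsum ss + 1"
      unfolding E using hi hi2 fpos by (simp add: field_simps)
  qed
qed

lemma valid_Gd:
  assumes "1 \<le> n"
  shows "valid_guesser n (Gd n ss)"
proof -
  define m where "m = nat \<lceil>log 2 (real (prod_list (rads ss)))\<rceil>"
  have ppos: "prod_list (rads ss) \<ge> 1"
  proof -
    have "\<forall>x\<in>set (rads ss). 1 \<le> x"
    proof
      fix x assume "x \<in> set (rads ss)"
      then obtain s where s: "s \<in> set ss" "x = s * s" unfolding rads_def by auto
      then have "1 \<le> s" using rng[OF s(1)] by simp
      then have "1 * 1 \<le> s * s" by (intro mult_le_mono)
      then show "1 \<le> x" using s by simp
    qed
    then show ?thesis by (rule prod_list_ge1)
  qed
  have pm: "prod_list (rads ss) \<le> 2 ^ m"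
  proof -
    have "real (prod_list (rads ss)) = 2 powr (log 2 (real (prod_list (rads ss))))"
      using ppos by simp
    also have "\<dots> \<le> 2 powr (real m)"
      unfolding m_def by (intro powr_mono) linarith+
    also have "\<dots> = 2 ^ m" by (simp add: powr_realpow)
    finally show ?thesis by (simp flip: of_nat_le_iff)
  qed
  show ?thesis unfolding valid_guesser_def
  proof (intro conjI allI impI ballI)
    show "init_state (Gd n ss) < 2 ^ mem_bits (Gd n ss)"
      using stt_less[of "{}"] pm unfolding Gd_def m_def by simp
  next
    fix s c
    show "set_pmf (guess_fn (Gd n ss) s) \<subseteq> {1..n}"
      using gs_range[OF assms] unfolding Gd_def by simp
    show "set_pmf (trans_fn (Gd n ss) s c) \<subseteq> {..<2 ^ mem_bits (Gd n ss)}"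
      using tr_less[of s c] pm unfolding Gd_def m_def by simp
  qed
qed

end

locale spec =
  fixes \<delta> :: real and N :: nat
  assumes d0: "0 < \<delta>" and d1: "\<delta> \<le> 1" and dN: "1 / \<delta> < (1 + \<delta>) ^ N"
begin

definition xx :: real where "xx = 1 + \<delta>"
definition fl :: "nat \<Rightarrow> nat" where "fl j = nat \<lfloor>xx ^ j\<rfloor>"
definition j0 :: nat where "j0 = Suc N"
definition Kn :: "nat \<Rightarrow> nat" where "Kn n = nat \<lfloor>log xx (real n)\<rfloor> - 1"
definition ssn :: "nat \<Rightarrow> nat list" where "ssn n = map fl [j0..<Suc (Kn n)]"

lemma x_gt1: "1 < xx" unfolding xx_def using d0 by simp
lemma x_pos: "0 < xx" using x_gt1 by simp

lemma fl_real: "real (fl j) = of_int \<lfloor>xx ^ j\<rfloor>"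
  unfolding fl_def using x_pos by simp

lemma fl_bounds: "xx ^ j - 1 < real (fl j)" "real (fl j) \<le> xx ^ j"
  unfolding fl_real by linarith+

lemma xN: "1 < \<delta> * xx ^ N"
proof -
  have "1 / \<delta> < xx ^ N" using dN unfolding xx_def .
  then show ?thesis using d0 by (simp add: field_simps)
qed

lemma pow_mono_x: "a \<le> b \<Longrightarrow> xx ^ a \<le> xx ^ b"
  using x_gt1 by (intro power_increasing) auto

lemma fl_step:
  assumes "N \<le> j" shows "fl j < fl (Suc j)"
proof -
  have "\<delta> * xx ^ N \<le> \<delta> * xx ^ j" using pow_mono_x[OF assms] d0 by simp
  then have "1 < \<delta> * xx ^ j" using xN by linarith
  then have "xx ^ j + 1 < xx ^ Suc j" unfolding xx_def by (simp add: algebra_simps)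
  then have "\<lfloor>xx ^ j\<rfloor> < \<lfloor>xx ^ Suc j\<rfloor>" by linarith
  moreover have "0 \<le> \<lfloor>xx ^ j\<rfloor>" using x_pos by simp
  ultimately show ?thesis unfolding fl_def by linarith
qed

lemma fl_mono:
  assumes "N \<le> a" "a < b" shows "fl a < fl b"
  using assms(2)
proof (induction b)
  case 0 then show ?case by simp
next
  case (Suc b)
  show ?case
  proof (cases "a = b")
    case True then show ?thesis using fl_step assms(1) by simp
  next
    case False
    then have "fl a < fl b" using Suc by simp
    also have "fl b < fl (Suc b)" using fl_step assms(1) Suc.prems False by simp
    finally show ?thesis .
  qed
qed

lemma pow_ge2: assumes "j0 \<le> j" shows "2 \<le> xx ^ j"
proof -
  have "xx ^ Suc N \<le> xx ^ j" using assms unfolding j0_def by (intro pow_mono_x)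
  moreover have "xx ^ Suc N = xx * xx ^ N" by simp
  moreover have "xx * (1 / \<delta>) \<le> xx * xx ^ N" using xN d0 x_pos by (simp add: field_simps)
  moreover have "xx * (1 / \<delta>) = 1 / \<delta> + 1" unfolding xx_def using d0 by (simp add: field_simps)
  moreover have "1 \<le> 1 / \<delta>" using d0 d1 by simp
  ultimately show ?thesis by linarith
qed

lemma fl_ge2: assumes "j0 \<le> j" shows "2 \<le> fl j"
proof -
  have "2 \<le> \<lfloor>xx ^ j\<rfloor>" using pow_ge2[OF assms] by linarith
  then show ?thesis unfolding fl_def by linarith
qed

lemma Kn_le: assumes "1 \<le> n" shows "real (Kn n) \<le> log xx (real n)"
proof -
  have "0 \<le> log xx (real n)" using assms x_gt1 by simp
  then show ?thesis unfolding Kn_def by linarith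
qed

lemma Kn_le1: assumes "1 \<le> n" "1 \<le> Kn n" shows "real (Kn n) \<le> log xx (real n) - 1"
proof -
  have "0 \<le> log xx (real n)" using assms x_gt1 by simp
  then show ?thesis using assms(2) unfolding Kn_def by linarith
qed

lemma fl_le_n: assumes "1 \<le> n" "j \<le> Kn n" shows "fl j \<le> n"
proof -
  have "real (fl j) \<le> xx ^ j" by (rule fl_bounds)
  also have "\<dots> = xx powr (real j)" using x_pos by (simp add: powr_realpow)
  also have "\<dots> \<le> xx powr (log xx (real n))"
    using x_gt1 Kn_le[OF assms(1)] assms(2) by (intro powr_mono) auto
  also have "\<dots> = real n" using x_gt1 assms(1) by simp
  finally show ?thesis by simp
qed

lemma lev_ssn: assumes "1 \<le> n" shows "lev n (ssn n)"
proof
  show "sorted_wrt (<) (ssn n)"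
    unfolding ssn_def sorted_wrt_iff_nth_less
  proof (intro allI impI)
    fix i j assume ij: "i < j" "j < length (map fl [j0..<Suc (Kn n)])"
    then have "j < Suc (Kn n) - j0" by (simp del: upt_Suc)
    then have "map fl [j0..<Suc (Kn n)] ! i = fl (j0 + i)" "map fl [j0..<Suc (Kn n)] ! j = fl (j0 + j)"
      using ij(1) by (simp_all del: upt_Suc)
    then show "map fl [j0..<Suc (Kn n)] ! i < map fl [j0..<Suc (Kn n)] ! j"
      using fl_mono[of "j0 + i" "j0 + j"] ij(1) unfolding j0_def by simp
  qed
next
  fix s assume "s \<in> set (ssn n)"
  then obtain j where j: "j0 \<le> j" "j \<le> Kn n" "s = fl j" unfolding ssn_def by auto
  then show "2 \<le> s \<and> s \<le> n" using fl_ge2 fl_le_n assms by auto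
qed

end

lemma prod_list_map_upt: "prod_list (map g [a..<b]) = (\<Prod>j\<in>{a..<b}. (g j :: nat))"
  by (induction b) auto

context spec begin

lemma log2_prod_bound:
  assumes "1 \<le> n"
  shows "log 2 (real (prod_list (rads (ssn n)))) \<le> real (Kn n * (Kn n + 1)) * log 2 xx"
proof -
  define K where "K = Kn n"
  have eq: "prod_list (rads (ssn n)) = (\<Prod>j\<in>{j0..<Suc K}. fl j * fl j)"
    unfolding rads_def ssn_def K_def by (simp only: map_map comp_def prod_list_map_upt)
  have "real (prod_list (rads (ssn n))) = (\<Prod>j\<in>{j0..<Suc K}. real (fl j) * real (fl j))"
    unfolding eq by simp
  also have "\<dots> \<le> (\<Prod>j\<in>{j0..<Suc K}. xx ^ (2 * j))"
  proof (rule prod_mono)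
    fix j assume "j \<in> {j0..<Suc K}"
    have "real (fl j) * real (fl j) \<le> xx ^ j * xx ^ j"
      using fl_bounds(2)[of j] by (intro mult_mono) auto
    then show "0 \<le> real (fl j) * real (fl j) \<and> real (fl j) * real (fl j) \<le> xx ^ (2 * j)"
      by (simp add: power_mult[symmetric] mult_2 power_add)
  qed
  also have "\<dots> = xx ^ (\<Sum>j\<in>{j0..<Suc K}. 2 * j)" by (rule power_sum[symmetric])
  also have "\<dots> \<le> xx ^ (K * (K + 1))"
  proof (rule pow_mono_x)
    have "(\<Sum>j\<in>{j0..<Suc K}. 2 * j) \<le> (\<Sum>j\<in>{0..<Suc K}. 2 * j)"
      by (rule sum_mono2) auto
    also have "\<dots> = 2 * (\<Sum>j\<in>{0..K}. j)" by (simp add: sum_distrib_left atLeastLessThanSuc_atLeastAtMost)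
    also have "\<dots> = K * (K + 1)" by (simp add: gauss_sum_nat)
    finally show "(\<Sum>j\<in>{j0..<Suc K}. 2 * j) \<le> K * (K + 1)" .
  qed
  finally have le: "real (prod_list (rads (ssn n))) \<le> xx ^ (K * (K + 1))" .
  have pos: "0 < real (prod_list (rads (ssn n)))"
  proof -
    have "\<forall>x\<in>set (rads (ssn n)). 1 \<le> x"
    proof
      fix x assume "x \<in> set (rads (ssn n))"
      then obtain s where s: "s \<in> set (ssn n)" "x = s * s" unfolding rads_def by auto
      then have "2 \<le> s" using lev.rng[OF lev_ssn[OF assms]] by blast
      then have "1 \<le> s" by simp
      then have "1 * 1 \<le> s * s" by (intro mult_le_mono)
      then show "1 \<le> x" using s by simp
    qed
    then have "1 \<le> prod_list (rads (ssn n))" by (rule prod_list_ge1)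
    then show ?thesis by simp
  qed
  have "log 2 (real (prod_list (rads (ssn n)))) \<le> log 2 (xx ^ (K * (K + 1)))"
    using le pos by simp
  also have "\<dots> = real (K * (K + 1)) * log 2 xx" using x_pos by (simp add: log_nat_power)
  finally show ?thesis unfolding K_def .
qed

lemma mem_bound:
  assumes "1 \<le> n"
  shows "real (nat \<lceil>log 2 (real (prod_list (rads (ssn n))))\<rceil>)
     \<le> (log 2 (real n))\<^sup>2 * log (1 + \<delta>) 2 + log 2 (real n)"
proof -
  define K where "K = Kn n"
  define L where "L = log xx (real n)"
  have lx: "0 < ln xx" using x_gt1 by simp
  have ln2: "0 < ln (2::real)" by simp
  have lnn: "0 \<le> ln (real n)" using assms by simp
  have rhs0: "0 \<le> (log 2 (real n))\<^sup>2 * log (1 + \<delta>) 2 + log 2 (real n)"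
  proof -
    have "0 \<le> log 2 (real n)" using assms by simp
    moreover have "0 \<le> log (1 + \<delta>) 2" using x_gt1 unfolding xx_def by simp
    ultimately show ?thesis by simp
  qed
  show ?thesis
  proof (cases "j0 \<le> K")
    case False
    then have "ssn n = []" unfolding ssn_def K_def by simp
    then have "prod_list (rads (ssn n)) = 1" by (simp add: rads_def)
    then show ?thesis using rhs0 by simp
  next
    case True
    then have K1: "1 \<le> K" unfolding j0_def by simp
    have KL: "real K \<le> L - 1" unfolding K_def L_def using Kn_le1[OF assms] K1 K_def by simp
    have lp: "log 2 (real (prod_list (rads (ssn n)))) \<le> real (K * (K + 1)) * log 2 xx"
      using log2_prod_bound[OF assms] unfolding K_def .
    have lp0: "0 \<le> log 2 (real (prod_list (rads (ssn n))))"
    proof -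
      have "\<forall>x\<in>set (rads (ssn n)). 1 \<le> x"
      proof
        fix x assume "x \<in> set (rads (ssn n))"
        then obtain s where s: "s \<in> set (ssn n)" "x = s * s" unfolding rads_def by auto
        then have "2 \<le> s" using lev.rng[OF lev_ssn[OF assms]] by blast
        then have "1 \<le> s" by simp
        then have "1 * 1 \<le> s * s" by (intro mult_le_mono)
        then show "1 \<le> x" using s by simp
      qed
      then have "1 \<le> prod_list (rads (ssn n))" by (rule prod_list_ge1)
      then show ?thesis by simp
    qed
    have m_le: "real (nat \<lceil>log 2 (real (prod_list (rads (ssn n))))\<rceil>) \<le> log 2 (real (prod_list (rads (ssn n)))) + 1"
      using lp0 by linarith
    have KK: "real K * (real K + 1) \<le> (L - 1) * L"
    proof -
      have "0 \<le> real K" by simp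
      then show ?thesis using KL by (intro mult_mono) auto
    qed
    have l2x: "0 < log 2 xx" using x_gt1 by simp
    have e: "real (K * (K + 1)) = real K * (real K + 1)" by (simp add: algebra_simps)
    have "real (K * (K + 1)) * log 2 xx \<le> (L - 1) * L * log 2 xx"
      unfolding e using KK l2x by (intro mult_right_mono) auto
    also have "\<dots> = (log 2 (real n))\<^sup>2 * log (1 + \<delta>) 2 - log 2 (real n)"
      unfolding L_def log_def xx_def[symmetric] using lx ln2
      by (simp add: field_simps power2_eq_square)
    finally have A: "real (K * (K + 1)) * log 2 xx \<le> (log 2 (real n))\<^sup>2 * log (1 + \<delta>) 2 - log 2 (real n)" .
    have "2 \<le> n"
    proof -
      have "1 \<le> L - 1" using KL K1 by linarith
      then have "2 \<le> L" by simp
      then have "xx powr 2 \<le> xx powr L" using x_gt1 by (intro powr_mono) auto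
      also have "\<dots> = real n" unfolding L_def using x_gt1 assms by simp
      finally have "xx powr 2 \<le> real n" .
      moreover have "1 < xx powr 2" using x_gt1 by (simp add: powr_realpow)
      ultimately show ?thesis by simp
    qed
    then have "1 \<le> log 2 (real n)" by simp
    then show ?thesis using m_le lp A by linarith
  qed
qed

end

lemma term_bound:
  fixes x u a b :: real
  assumes x: "1 < x" and u: "2 \<le> u" and a: "u - 1 < a" "a \<le> u" and b: "x * u - 1 < b" "b \<le> x * u"
  shows "\<bar>1 - a / b - (x - 1) / x\<bar> \<le> 2 / (x * u)"
proof -
  have xu2: "u \<le> x * u" using x u by (intro mult_right_mono[of 1 x u, simplified]) auto
  have xu: "2 \<le> x * u" using xu2 u by linarith
  have bpos: "0 < b" using b xu by linarith
  have lo: "(u - 1) / (x * u) \<le> a / b"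
  proof -
    have "(u - 1) / (x * u) \<le> (u - 1) / b"
      using u b bpos by (intro divide_left_mono) auto
    also have "\<dots> \<le> a / b" using a bpos by (intro divide_right_mono) auto
    finally show ?thesis .
  qed
  have hi: "a / b \<le> u / (x * u - 1)"
  proof -
    have "a / b \<le> u / b" using a bpos by (intro divide_right_mono) auto
    also have "\<dots> \<le> u / (x * u - 1)"
      using u b xu by (intro divide_left_mono) auto
    finally show ?thesis .
  qed
  have e1: "1 - a / b - (x - 1) / x = 1 / x - a / b" using x by (simp add: field_simps)
  have up: "1 / x - a / b \<le> 2 / (x * u)"
  proof -
    have "1 / x - (u - 1) / (x * u) = 1 / (x * u)" using x u by (simp add: field_simps)
    moreover have "1 / (x * u) \<le> 2 / (x * u)" using xu by (simp add: divide_right_mono)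
    ultimately show ?thesis using lo by linarith
  qed
  have dn: "- (2 / (x * u)) \<le> 1 / x - a / b"
  proof -
    have p1: "0 < x * u - 1" using xu by linarith
    have "1 / x - u / (x * u - 1) = - (1 / (x * (x * u - 1)))"
      using x p1 by (simp add: field_simps)
    moreover have "1 / (x * (x * u - 1)) \<le> 2 / (x * u)"
    proof -
      have "x * u \<le> 2 * (x * (x * u - 1))"
      proof -
        have e: "2 * (x * u - 1) = 2 * (x * u) - 2" by (simp add: algebra_simps)
        have h: "u \<le> 2 * (x * u - 1)" unfolding e using xu2 u by linarith
        have "x * u \<le> x * (2 * (x * u - 1))" using h x by (intro mult_left_mono) auto
        then show ?thesis by (simp add: algebra_simps)
      qed
      then show ?thesis using x u p1 xu by (simp add: field_simps)
    qed
    ultimately show ?thesis using hi by linarith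
  qed
  show ?thesis unfolding e1 using up dn by (simp add: abs_le_iff)
qed

context spec begin

lemma ssn_nth: "i < length (ssn n) \<Longrightarrow> ssn n ! i = fl (j0 + i)"
  unfolding ssn_def by (simp del: upt_Suc)

lemma len_ssn: "length (ssn n) = Suc (Kn n) - j0"
  unfolding ssn_def by (simp del: upt_Suc)

lemma term_est:
  assumes n: "1 \<le> n" and i: "i < length (ssn n)"
  shows "\<bar>real (card (Tl (ssn n) i)) / real (ssn n ! i) - \<delta> / xx\<bar>
           \<le> (if i = 0 then 1 else 0) + 2 * (1 / xx) ^ i"
proof -
  interpret lev n "ssn n" by (rule lev_ssn[OF n])
  have c01: "0 < \<delta> / xx" "\<delta> / xx < 1" using d0 unfolding xx_def by (auto simp: field_simps)
  show ?thesis
  proof (cases "i = 0")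
    case True
    have "Tl (ssn n) i = {0<..ssn n ! 0}" unfolding Tl_def True by simp
    then have "real (card (Tl (ssn n) i)) / real (ssn n ! i) = 1"
      using ss_ge[OF i] True by simp
    then show ?thesis using True c01 by simp
  next
    case False
    define a where "a = fl (j0 + i - 1)"
    define b where "b = fl (j0 + i)"
    have sa: "ssn n ! (i - 1) = a" unfolding a_def using i False by (simp add: ssn_nth)
    have sb: "ssn n ! i = b" unfolding b_def using i by (simp add: ssn_nth)
    have ab: "a < b" unfolding a_def b_def using fl_mono[of "j0 + i - 1" "j0 + i"] False unfolding j0_def by simp
    have "Tl (ssn n) i = {a<..b}" unfolding Tl_def using False sa sb by simp
    then have cT: "real (card (Tl (ssn n) i)) = real b - real a" using ab by simp
    have bpos: "0 < real b" using ab by simp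
    have t: "real (card (Tl (ssn n) i)) / real (ssn n ! i) = 1 - real a / real b"
      unfolding cT sb using bpos by (simp add: field_simps)
    define u where "u = xx ^ (j0 + i - 1)"
    have xu: "xx * u = xx ^ (j0 + i)" unfolding u_def using False
      by (metis Suc_pred' add_gr_0 gr0I power_Suc)
    have u2: "2 \<le> u" unfolding u_def using False by (intro pow_ge2) simp
    have fa: "u - 1 < real a" "real a \<le> u" unfolding a_def u_def using fl_bounds by auto
    have fb: "xx * u - 1 < real b" "real b \<le> xx * u" unfolding b_def xu using fl_bounds by auto
    have "\<bar>1 - real a / real b - (xx - 1) / xx\<bar> \<le> 2 / (xx * u)"
      by (rule term_bound[OF x_gt1 u2 fa fb])
    moreover have "(xx - 1) / xx = \<delta> / xx" unfolding xx_def by simp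
    moreover have "2 / (xx * u) \<le> 2 * (1 / xx) ^ i"
    proof -
      have "xx ^ i \<le> xx ^ (j0 + i)" by (intro pow_mono_x) simp
      then have "2 / xx ^ (j0 + i) \<le> 2 / xx ^ i" using x_pos by (intro divide_left_mono) auto
      then show ?thesis unfolding xu by (simp add: power_one_over)
    qed
    ultimately show ?thesis unfolding t using False by simp
  qed
qed

lemma Lsum_bound:
  assumes n: "1 \<le> n"
  shows "\<bar>Lsum (ssn n) - real (length (ssn n)) * (\<delta> / xx)\<bar> \<le> 1 + 2 / (1 - 1 / xx)"
proof -
  define len where "len = length (ssn n)"
  define r where "r = 1 / xx"
  have r: "0 < r" "r < 1" unfolding r_def using x_gt1 by auto
  have "Lsum (ssn n) - real len * (\<delta> / xx)
      = (\<Sum>i<len. real (card (Tl (ssn n) i)) / real (ssn n ! i) - \<delta> / xx)"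
    unfolding Lsum_def len_def by (simp add: sum_subtractf)
  then have "\<bar>Lsum (ssn n) - real len * (\<delta> / xx)\<bar>
      \<le> (\<Sum>i<len. \<bar>real (card (Tl (ssn n) i)) / real (ssn n ! i) - \<delta> / xx\<bar>)"
    by (simp add: sum_abs)
  also have "\<dots> \<le> (\<Sum>i<len. (if i = 0 then 1 else 0) + 2 * r ^ i)"
    unfolding r_def len_def by (intro sum_mono term_est[OF n]) simp
  also have "\<dots> = (\<Sum>i<len. (if i = 0 then 1 else 0)) + 2 * (\<Sum>i<len. r ^ i)"
    by (simp add: sum.distrib sum_distrib_left)
  also have "(\<Sum>i<len. (if i = 0 then 1 else 0::real)) \<le> 1"
    by (simp add: sum.delta)
  also have "(\<Sum>i<len. r ^ i) \<le> 1 / (1 - r)"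
  proof -
    have "(\<Sum>i<len. r ^ i) = (1 - r ^ len) / (1 - r)" using r by (simp add: sum_gp_strict)
    also have "\<dots> \<le> 1 / (1 - r)" using r by (intro divide_right_mono) auto
    finally show ?thesis .
  qed
  finally show ?thesis unfolding len_def r_def by simp
qed

lemma len_bound:
  assumes n: "1 \<le> n"
  shows "\<bar>real (length (ssn n)) - log xx (real n)\<bar> \<le> real j0 + 2"
proof -
  define L where "L = log xx (real n)"
  have L0: "0 \<le> L" unfolding L_def using n x_gt1 by simp
  define F where "F = nat \<lfloor>L\<rfloor>"
  have F: "real F \<le> L" "L - 1 < real F" unfolding F_def using L0 by linarith+
  have K: "Kn n = F - 1" unfolding Kn_def F_def L_def ..
  have "real (length (ssn n)) \<le> real F + 1" unfolding len_ssn K by simp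
  moreover have "real F - real j0 \<le> real (length (ssn n))" unfolding len_ssn K by simp
  ultimately show ?thesis unfolding L_def[symmetric] using F by (simp add: abs_le_iff)
qed

definition CC :: real where "CC = 2 + 2 / (1 - 1 / xx) + (\<delta> / xx) * (real j0 + 2)"

lemma E_bound:
  assumes n: "1 \<le> n"
  shows "\<bar>expected_score n (Gd n (ssn n)) - \<delta> / ((1 + \<delta>) * ln (1 + \<delta>)) * ln (real n)\<bar> \<le> CC"
proof -
  interpret lev n "ssn n" by (rule lev_ssn[OF n])
  have sb: "Lsum (ssn n) \<le> expected_score n (Gd n (ssn n))" "expected_score n (Gd n (ssn n)) \<le> Lsum (ssn n) + 1"
    using score_bounds by auto
  have c0: "0 < \<delta> / xx" using d0 x_pos by simp
  have lb: "\<bar>real (length (ssn n)) * (\<delta> / xx) - log xx (real n) * (\<delta> / xx)\<bar> \<le> (real j0 + 2) * (\<delta> / xx)"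
  proof -
    have "\<bar>real (length (ssn n)) * (\<delta> / xx) - log xx (real n) * (\<delta> / xx)\<bar>
        = \<bar>real (length (ssn n)) - log xx (real n)\<bar> * (\<delta> / xx)"
    proof -
      have "real (length (ssn n)) * (\<delta> / xx) - log xx (real n) * (\<delta> / xx)
          = (real (length (ssn n)) - log xx (real n)) * (\<delta> / xx)" by (simp add: algebra_simps)
      then show ?thesis using c0 by (simp only: abs_mult)
    qed
    also have "\<dots> \<le> (real j0 + 2) * (\<delta> / xx)" using len_bound[OF n] c0 by (intro mult_right_mono) auto
    finally show ?thesis .
  qed
  have tgt: "\<delta> / ((1 + \<delta>) * ln (1 + \<delta>)) * ln (real n) = log xx (real n) * (\<delta> / xx)"
    unfolding xx_def log_def by (simp add: mult.commute)
  have cm: "(real j0 + 2) * (\<delta> / xx) = (\<delta> / xx) * (real j0 + 2)" by (rule mult.commute)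
  have lsb: "\<bar>Lsum (ssn n) - real (length (ssn n)) * (\<delta> / xx)\<bar> \<le> 1 + 2 / (1 - 1 / xx)"
    by (rule Lsum_bound[OF n])
  show ?thesis unfolding tgt CC_def using sb lsb lb cm unfolding abs_le_iff by linarith
qed

end

lemma asym_from_bound:
  fixes f :: "nat \<Rightarrow> real"
  assumes b: "\<And>n. 1 \<le> n \<Longrightarrow> \<bar>f n - c * ln (real n)\<bar> \<le> C" and c: "0 < c"
  shows "f \<sim>[at_top] (\<lambda>n. c * ln (real n))"
proof (rule smallo_imp_asymp_equiv, rule landau_o.smallI)
  fix e :: real assume e: "0 < e"
  have C0: "0 \<le> C" using b[of 1] by simp
  have lim: "filterlim (\<lambda>n::nat. ln (real n)) at_top at_top"
    by (rule filterlim_compose[OF ln_at_top filterlim_real_sequentially])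
  have ev1: "eventually (\<lambda>n::nat. C / (e * c) \<le> ln (real n)) at_top"
    using lim by (simp add: filterlim_at_top)
  have ev2: "eventually (\<lambda>n::nat. 1 \<le> n) at_top" by (rule eventually_ge_at_top)
  show "eventually (\<lambda>n. norm (f n - c * ln (real n)) \<le> e * norm (c * ln (real n))) at_top"
    using ev1 ev2
  proof eventually_elim
    case (elim n)
    have ln0: "0 \<le> ln (real n)" using elim(2) by simp
    have ec: "0 < e * c" using e c by simp
    have "C = e * c * (C / (e * c))" using e c by (simp add: field_simps)
    also have "\<dots> \<le> e * c * ln (real n)" using elim(1) ec by (intro mult_left_mono) auto
    finally have "C \<le> e * c * ln (real n)" .
    moreover have "norm (c * ln (real n)) = c * ln (real n)" using c ln0 by simp
    ultimately show ?case using b[OF elim(2)] by (simp add: mult.assoc)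
  qed
qed

theorem mainTheorem2:
  fixes \<delta> :: real
  assumes "0 < \<delta>" and "\<delta> \<le> 1"
  shows "\<exists>G :: nat \<Rightarrow> guesser.
     (\<forall>n \<ge> 1. valid_guesser n (G n) \<and>
        real (mem_bits (G n)) \<le> (log 2 (real n))\<^sup>2 * log (1 + \<delta>) 2 + log 2 (real n)) \<and>
     (\<lambda>n. expected_score n (G n)) \<sim>[at_top]
       (\<lambda>n. \<delta> / ((1 + \<delta>) * ln (1 + \<delta>)) * ln (real n))"
proof -
  have "1 < 1 + \<delta>" using assms by simp
  then obtain N where N: "1 / \<delta> < (1 + \<delta>) ^ N" using real_arch_pow by blast
  interpret spec \<delta> N using assms N by unfold_locales
  have cpos: "0 < \<delta> / ((1 + \<delta>) * ln (1 + \<delta>))" using assms by simp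
  show ?thesis
  proof (intro exI[of _ "\<lambda>n. Gd n (ssn n)"] conjI allI impI)
    fix n :: nat assume n: "1 \<le> n"
    show "valid_guesser n (Gd n (ssn n))"
      using lev.valid_Gd[OF lev_ssn[OF n] n] .
    show "real (mem_bits (Gd n (ssn n))) \<le> (log 2 (real n))\<^sup>2 * log (1 + \<delta>) 2 + log 2 (real n)"
      using mem_bound[OF n] unfolding Gd_def by simp
  next
    show "(\<lambda>n. expected_score n (Gd n (ssn n))) \<sim>[at_top] (\<lambda>n. \<delta> / ((1 + \<delta>) * ln (1 + \<delta>)) * ln (real n))"
      by (rule asym_from_bound[OF E_bound cpos])
  qed
qed

end
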